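(* For all $n\geq 0$, $$m_n=\sum_{k=0}^{n}\binom{n}{k}d_k,$$ where $d_k$ is the number of symmetric Dyck paths of length $2k$ and $m_n$ is the number of symmetric Motzkin paths of length $2n$.
   Context: Steps: $U=(1,1)$, $D=(1,-1)$, $h=(1,0)$. A Dyck path of length $2n$ is a lattice path from $(0,0)$ to $(2n,0)$ using steps $U,D$ that never goes below the $x$-axis; a Motzkin path of length $2n$ is the same but steps $U,D,h$ are allowed. Such a path with step sequence $s_1s_2\cdots s_{2n}$ is symmetric if for every $i$, $s_{2n+1-i}$ is the mirror of $s_i$, where the mirror of $U$ is $D$, of $D$ is $U$, and of $h$ is $h$ (i.e. the path is invariant under reflection in the line $x=n$). $d_n$ denotes the number of symmetric Dyck paths of length $2n$ (so $d_n=\binom{n}{\lfloor n/2\rfloor}$) and $m_n$ the number of symmetric Motzkin paths of length $2n$. *)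

theory Defs
  imports Main
begin

datatype step = U | D | H

fun stepval :: "step \<Rightarrow> int" where
  "stepval U = 1" | "stepval D = -1" | "stepval H = 0"

fun mirror :: "step \<Rightarrow> step" where
  "mirror U = D" | "mirror D = U" | "mirror H = H"

definition height :: "step list \<Rightarrow> nat \<Rightarrow> int" where
  "height p i = (\<Sum>j<i. stepval (p ! j))"

definition nonneg_path :: "step list \<Rightarrow> bool" where
  "nonneg_path p \<longleftrightarrow> (\<forall>i\<le>length p. height p i \<ge> 0) \<and> height p (length p) = 0"

definition dyck_path :: "nat \<Rightarrow> step list \<Rightarrow> bool" where
  "dyck_path n p \<longleftrightarrow> length p = 2*n \<and> set p \<subseteq> {U, D} \<and> nonneg_path p"

definition motzkin_path :: "nat \<Rightarrow> step list \<Rightarrow> bool" where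
  "motzkin_path n p \<longleftrightarrow> length p = 2*n \<and> nonneg_path p"

(* s_{2n+1-i} = mirror s_i for all i (1-based); here 0-based *)
definition symmetric :: "step list \<Rightarrow> bool" where
  "symmetric p \<longleftrightarrow> (\<forall>i<length p. p ! (length p - 1 - i) = mirror (p ! i))"

definition d :: "nat \<Rightarrow> nat" where
  "d n = card {p. dyck_path n p \<and> symmetric p}"

definition m :: "nat \<Rightarrow> nat" where
  "m n = card {p. motzkin_path n p \<and> symmetric p}"

end

theory Submission
  imports Defs
begin

fun ok :: "int \<Rightarrow> step list \<Rightarrow> bool" where
  "ok h [] = True"
| "ok h (x#xs) = (h + stepval x \<ge> 0 \<and> ok (h + stepval x) xs)"

fun gen :: "nat \<Rightarrow> int \<Rightarrow> step list list" where
  "gen 0 h = [[]]"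
| "gen (Suc n) h = map (Cons U) (gen n (h+1)) @ map (Cons H) (gen n h)
     @ (if h \<ge> 1 then map (Cons D) (gen n (h-1)) else [])"

fun genUD :: "nat \<Rightarrow> int \<Rightarrow> step list list" where
  "genUD 0 h = [[]]"
| "genUD (Suc n) h = map (Cons U) (genUD n (h+1))
     @ (if h \<ge> 1 then map (Cons D) (genUD n (h-1)) else [])"

lemma set_gen: "h \<ge> 0 \<Longrightarrow> set (gen n h) = {xs. length xs = n \<and> ok h xs}"
proof (induction n arbitrary: h)
  case 0 then show ?case by auto
next
  case (Suc n)
  show ?case
  proof (rule set_eqI, rule iffI)
    fix xs assume "xs \<in> set (gen (Suc n) h)"
    then show "xs \<in> {xs. length xs = Suc n \<and> ok h xs}"
      using Suc.IH Suc.prems by (auto split: if_splits)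
  next
    fix xs assume "xs \<in> {xs. length xs = Suc n \<and> ok h xs}"
    then obtain x ys where xs: "xs = x # ys" "length ys = n" "ok h (x#ys)"
      by (cases xs) auto
    then show "xs \<in> set (gen (Suc n) h)"
      using Suc.IH Suc.prems by (cases x) auto
  qed
qed

lemma set_genUD: "h \<ge> 0 \<Longrightarrow> set (genUD n h) = {xs. length xs = n \<and> set xs \<subseteq> {U,D} \<and> ok h xs}"
proof (induction n arbitrary: h)
  case 0 then show ?case by auto
next
  case (Suc n)
  show ?case
  proof (rule set_eqI, rule iffI)
    fix xs assume "xs \<in> set (genUD (Suc n) h)"
    then show "xs \<in> {xs. length xs = Suc n \<and> set xs \<subseteq> {U,D} \<and> ok h xs}"
      using Suc.IH Suc.prems by (auto split: if_splits)
  next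
    fix xs assume "xs \<in> {xs. length xs = Suc n \<and> set xs \<subseteq> {U,D} \<and> ok h xs}"
    then obtain x ys where xs: "xs = x # ys" "length ys = n" "ok h (x#ys)" "set (x#ys) \<subseteq> {U,D}"
      by (cases xs) auto
    then show "xs \<in> set (genUD (Suc n) h)"
      using Suc.IH Suc.prems by (cases x) auto
  qed
qed

lemma distinct_gen: "distinct (gen n h)"
  by (induction n arbitrary: h) (auto simp: distinct_map inj_on_def)

lemma distinct_genUD: "distinct (genUD n h)"
  by (induction n arbitrary: h) (auto simp: distinct_map inj_on_def)

lemma count_id: "length (gen n h) = (\<Sum>k\<le>n. (n choose k) * length (genUD k h))"
proof (induction n arbitrary: h)
  case 0 then show ?case by simp
next
  case (Suc n)
  define V where "V k g = length (genUD k g)" for k g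
  have VS: "V (Suc k) h = V k (h+1) + (if h \<ge> 1 then V k (h-1) else 0)" for k
    by (simp add: V_def)
  have "(\<Sum>k\<le>Suc n. (Suc n choose k) * V k h)
      = V 0 h + (\<Sum>k\<le>n. (Suc n choose Suc k) * V (Suc k) h)"
    by (subst sum.atMost_Suc_shift) simp
  also have "\<dots> = (V 0 h + (\<Sum>k\<le>n. (n choose Suc k) * V (Suc k) h))
       + (\<Sum>k\<le>n. (n choose k) * V (Suc k) h)"
    by (simp add: algebra_simps sum.distrib)
  also have "V 0 h + (\<Sum>k\<le>n. (n choose Suc k) * V (Suc k) h) = (\<Sum>k\<le>Suc n. (n choose k) * V k h)"
    unfolding sum.atMost_Suc_shift by simp
  also have "\<dots> = (\<Sum>k\<le>n. (n choose k) * V k h)" by simp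
  also have "(\<Sum>k\<le>n. (n choose k) * V (Suc k) h)
      = (\<Sum>k\<le>n. (n choose k) * V k (h+1)) + (if h \<ge> 1 then (\<Sum>k\<le>n. (n choose k) * V k (h-1)) else 0)"
    by (simp add: VS algebra_simps sum.distrib)
  finally show ?case using Suc.IH by (simp add: V_def)
qed

definition ps :: "step list \<Rightarrow> nat \<Rightarrow> int" where
  "ps p i = sum_list (map stepval (take i p))"

lemma height_ps: "i \<le> length p \<Longrightarrow> height p i = ps p i"
proof (induction i)
  case 0 then show ?case by (simp add: height_def ps_def)
next
  case (Suc i)
  then have "take (Suc i) p = take i p @ [p ! i]" by (simp add: take_Suc_conv_app_nth)
  then show ?case using Suc by (simp add: height_def ps_def)
qed

lemma ok_ps: "ok h q \<longleftrightarrow> (\<forall>i. 0 < i \<and> i \<le> length q \<longrightarrow> h + ps q i \<ge> 0)"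
proof (induction q arbitrary: h)
  case Nil then show ?case by (simp add: ps_def)
next
  case (Cons x q)
  show ?case
  proof
    assume a: "ok h (x#q)"
    show "\<forall>i. 0 < i \<and> i \<le> length (x#q) \<longrightarrow> h + ps (x#q) i \<ge> 0"
    proof (intro allI impI)
      fix i assume i: "0 < i \<and> i \<le> length (x#q)"
      then obtain j where j: "i = Suc j" by (cases i) auto
      show "h + ps (x#q) i \<ge> 0"
      proof (cases j)
        case 0 then show ?thesis using a j by (simp add: ps_def)
      next
        case (Suc j')
        then show ?thesis using a j i Cons.IH[of "h + stepval x"] by (auto simp: ps_def)
      qed
    qed
  next
    assume a: "\<forall>i. 0 < i \<and> i \<le> length (x#q) \<longrightarrow> h + ps (x#q) i \<ge> 0"
    have 1: "h + stepval x \<ge> 0" using a[rule_format, of 1] by (simp add: ps_def)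
    have "\<forall>i. 0 < i \<and> i \<le> length q \<longrightarrow> h + stepval x + ps q i \<ge> 0"
    proof (intro allI impI)
      fix i assume "0 < i \<and> i \<le> length q"
      then show "h + stepval x + ps q i \<ge> 0" using a[rule_format, of "Suc i"] by (simp add: ps_def algebra_simps)
    qed
    then show "ok h (x#q)" using 1 Cons.IH by simp
  qed
qed

lemma ok0: "ok 0 q \<longleftrightarrow> (\<forall>i\<le>length q. ps q i \<ge> 0)"
  unfolding ok_ps by (auto simp: ps_def) (metis bot_nat_0.not_eq_extremum le0 list.size(3) take_0 sum_list.Nil list.map(1) order_refl)

lemma stepval_mirror: "stepval (mirror x) = - stepval x"
  by (cases x) auto

lemma sum_mirror2: "sum_list (map (stepval \<circ> mirror) xs) = - sum_list (map stepval xs)"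
  by (induction xs) (auto simp: stepval_mirror)

lemma sum_mirror: "sum_list (map stepval (map mirror xs)) = - sum_list (map stepval xs)"
  by (induction xs) (auto simp: stepval_mirror)

definition dbl :: "step list \<Rightarrow> step list" where
  "dbl q = q @ rev (map mirror q)"

lemma ps_dbl:
  assumes "i \<le> 2 * length q"
  shows "ps (dbl q) i = ps q (if i \<le> length q then i else 2 * length q - i)"
proof (cases "i \<le> length q")
  case True then show ?thesis by (simp add: dbl_def ps_def)
next
  case False
  define n where "n = length q"
  define j where "j = i - n"
  have ij: "i = n + j" "j \<le> n" using False assms by (auto simp: n_def j_def)
  have "take i (dbl q) = q @ take j (rev (map mirror q))"
    using ij by (simp add: dbl_def n_def)
  also have "take j (rev (map mirror q)) = rev (drop (n - j) (map mirror q))"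
    using ij by (simp add: take_rev n_def)
  finally have t: "take i (dbl q) = q @ rev (map mirror (drop (n - j) q))" by (simp add: drop_map)
  have "sum_list (map stepval q) = sum_list (map stepval (take (n-j) q)) + sum_list (map stepval (drop (n-j) q))"
    by (metis append_take_drop_id map_append sum_list_append)
  then have "ps (dbl q) i = ps q (n - j)"
    using t by (simp add: ps_def rev_map[symmetric] sum_mirror sum_mirror2)
  then show ?thesis using False ij by (simp add: n_def)
qed

lemma sym_dbl: "symmetric (dbl q)"
  unfolding symmetric_def dbl_def
proof (intro allI impI)
  fix i assume i: "i < length (q @ rev (map mirror q))"
  define n where "n = length q"
  have mm: "mirror (mirror x) = x" for x by (cases x) auto
  show "(q @ rev (map mirror q)) ! (length (q @ rev (map mirror q)) - 1 - i) = mirror ((q @ rev (map mirror q)) ! i)"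
  proof (cases "i < n")
    case True
    have l: "length (q @ rev (map mirror q)) - 1 - i = n + (n - 1 - i)" using True i by (simp add: n_def)
    have "(q @ rev (map mirror q)) ! (n + (n - 1 - i)) = rev (map mirror q) ! (n - 1 - i)"
      by (simp add: nth_append n_def)
    also have "\<dots> = mirror (q ! i)" using True by (simp add: rev_nth n_def)
    finally have c: "(q @ rev (map mirror q)) ! (length (q @ rev (map mirror q)) - 1 - i) = mirror (q ! i)"
      unfolding l .
    have "(q @ rev (map mirror q)) ! i = q ! i" using True by (simp add: nth_append n_def)
    then show ?thesis using c by simp
  next
    case False
    then show ?thesis using i by (auto simp: nth_append rev_nth n_def mm)
  qed
qed

lemma sym_eq_dbl:
  assumes "symmetric p" "length p = 2 * n"
  shows "p = dbl (take n p)"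
proof (rule nth_equalityI)
  show "length p = length (dbl (take n p))" using assms by (simp add: dbl_def)
next
  fix i assume i: "i < length p"
  have mm: "mirror (mirror x) = x" for x by (cases x) auto
  show "p ! i = dbl (take n p) ! i"
  proof (cases "i < n")
    case True then show ?thesis using assms i by (simp add: dbl_def nth_append)
  next
    case False
    have j: "2*n - 1 - i < length p" using assms i by auto
    have s: "p ! (length p - 1 - (2*n - 1 - i)) = mirror (p ! (2*n - 1 - i))"
      using assms(1) j unfolding symmetric_def by blast
    have e: "length p - 1 - (2*n - 1 - i) = i" using assms i by auto
    have "p ! i = mirror (p ! (2*n - 1 - i))" using s unfolding e .
    then show ?thesis using False assms i
      by (simp add: dbl_def nth_append rev_nth min_def mm mult_2)
  qed
qed

lemma nonneg_dbl: "nonneg_path (dbl q) \<longleftrightarrow> ok 0 q"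
proof -
  define n where "n = length q"
  have len: "length (dbl q) = 2 * n" by (simp add: dbl_def n_def)
  have "nonneg_path (dbl q) \<longleftrightarrow> (\<forall>i\<le>2*n. ps (dbl q) i \<ge> 0) \<and> ps (dbl q) (2*n) = 0"
    unfolding nonneg_path_def using len height_ps by simp
  also have "ps (dbl q) (2*n) = 0"
  proof -
    have "ps (dbl q) (2*n) = ps q 0" using ps_dbl[of "2*n" q] by (simp add: n_def)
    then show ?thesis by (simp add: ps_def)
  qed
  also have "(\<forall>i\<le>2*n. ps (dbl q) i \<ge> 0) \<longleftrightarrow> (\<forall>i\<le>n. ps q i \<ge> 0)"
  proof
    assume a: "\<forall>i\<le>2*n. ps (dbl q) i \<ge> 0"
    show "\<forall>i\<le>n. ps q i \<ge> 0"
    proof (intro allI impI)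
      fix i assume "i \<le> n" then show "ps q i \<ge> 0" using a[rule_format, of i] ps_dbl[of i q] by (simp add: n_def)
    qed
  next
    assume a: "\<forall>i\<le>n. ps q i \<ge> 0"
    show "\<forall>i\<le>2*n. ps (dbl q) i \<ge> 0"
    proof (intro allI impI)
      fix i assume "i \<le> 2*n" then show "ps (dbl q) i \<ge> 0" using a ps_dbl[of i q] by (simp add: n_def)
    qed
  qed
  finally show ?thesis using ok0 by (simp add: n_def)
qed

lemma set_dbl: "set (dbl q) \<subseteq> {U,D} \<longleftrightarrow> set q \<subseteq> {U,D}"
proof -
  have "mirror x \<in> {U,D} \<longleftrightarrow> x \<in> {U,D}" for x by (cases x) auto
  then show ?thesis by (auto simp: dbl_def)
qed

lemma inj_dbl: "inj dbl"
proof (rule injI)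
  fix x y assume e: "dbl x = dbl y"
  then have "length (dbl x) = length (dbl y)" by simp
  then have l: "length x = length y" by (simp add: dbl_def)
  have "x = take (length x) (dbl x)" by (simp add: dbl_def)
  also have "\<dots> = take (length y) (dbl y)" using e l by simp
  also have "\<dots> = y" by (simp add: dbl_def)
  finally show "x = y" .
qed

lemma m_eq: "m n = length (gen n 0)"
proof -
  have "{p. motzkin_path n p \<and> symmetric p} = dbl ` {q. length q = n \<and> ok 0 q}"
  proof (rule set_eqI, rule iffI)
    fix p assume "p \<in> {p. motzkin_path n p \<and> symmetric p}"
    then have p: "length p = 2*n" "nonneg_path p" "symmetric p" by (auto simp: motzkin_path_def)
    then have e: "p = dbl (take n p)" using sym_eq_dbl by blast
    then have "ok 0 (take n p)" using p nonneg_dbl by metis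
    then show "p \<in> dbl ` {q. length q = n \<and> ok 0 q}" using e p by (intro image_eqI[of _ _ "take n p"]) auto
  next
    fix p assume "p \<in> dbl ` {q. length q = n \<and> ok 0 q}"
    then show "p \<in> {p. motzkin_path n p \<and> symmetric p}"
      by (auto simp: motzkin_path_def nonneg_dbl sym_dbl) (simp add: dbl_def)
  qed
  then have "m n = card {q. length q = n \<and> ok 0 q}"
    unfolding m_def using inj_dbl by (simp add: card_image inj_on_subset)
  also have "\<dots> = length (gen n 0)"
    using distinct_card[OF distinct_gen, of n 0] set_gen by simp
  finally show ?thesis .
qed

lemma d_eq: "d n = length (genUD n 0)"
proof -
  have "{p. dyck_path n p \<and> symmetric p} = dbl ` {q. length q = n \<and> set q \<subseteq> {U,D} \<and> ok 0 q}"
  proof (rule set_eqI, rule iffI)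
    fix p assume "p \<in> {p. dyck_path n p \<and> symmetric p}"
    then have p: "length p = 2*n" "nonneg_path p" "symmetric p" "set p \<subseteq> {U,D}" by (auto simp: dyck_path_def)
    then have e: "p = dbl (take n p)" using sym_eq_dbl by blast
    then have "ok 0 (take n p)" "set (take n p) \<subseteq> {U,D}" using p nonneg_dbl set_dbl by metis+
    then show "p \<in> dbl ` {q. length q = n \<and> set q \<subseteq> {U,D} \<and> ok 0 q}"
      using e p by (intro image_eqI[of _ _ "take n p"]) auto
  next
    fix p assume "p \<in> dbl ` {q. length q = n \<and> set q \<subseteq> {U,D} \<and> ok 0 q}"
    then show "p \<in> {p. dyck_path n p \<and> symmetric p}"
      using set_dbl by (auto simp: dyck_path_def nonneg_dbl sym_dbl) (simp add: dbl_def)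
  qed
  then have "d n = card {q. length q = n \<and> set q \<subseteq> {U,D} \<and> ok 0 q}"
    unfolding d_def using inj_dbl by (simp add: card_image inj_on_subset)
  also have "\<dots> = length (genUD n 0)"
    using distinct_card[OF distinct_genUD, of n 0] set_genUD by simp
  finally show ?thesis .
qed

theorem theorem3p1:
  fixes n :: nat
  shows "m n = (\<Sum>k=0..n. (n choose k) * d k)"
  using count_id[of n 0] by (simp add: m_eq d_eq atLeast0AtMost)

end
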